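(* Consider running GD-$k$ with rate $r=\frac{1}{\gamma k^2}$ on an instance $\sigma$ of $k$-MPMD with $m$ requests on an $H$-metric space $(\chi,d_H)$ with parameter $\gamma$, and let $\mathcal M=\{M_1,\ldots,M_p\}$ be the output perfect $k$-way matching, $M_\ell=\{v_{\ell,1},\ldots,v_{\ell,k}\}$. Let $T$ be the time at which all requests are matched. Then the total distance cost satisfies $$\sum_{\ell=1}^p d_H(\mathrm{pos}(v_{\ell,1}),\ldots,\mathrm{pos}(v_{\ell,k}))\le 4\gamma mk\sum_{S\subseteq V}\mathrm{sur}(S)(k-\mathrm{sur}(S))\,y_S(T)\le 4\gamma mk\,\mathcal D'(\sigma),$$ where $\mathcal D'(\sigma)$ is the optimal value of $(\mathcal D')$.
   Context: $k\ge2$. An $H$-metric with parameter $\gamma$ (integer, $1\le\gamma\le k-1$) is a map $d_H:\chi^k\to[0,\infty)$ that is invariant under permutation of its arguments, is zero iff all arguments are equal, satisfies $d_H(p_1,\ldots,p_k)\le d_H(p_1,\ldots,p_i,a,\ldots,a)+d_H(a,\ldots,a,p_{i+1},\ldots,p_k)$ for all $p_j,a\in\chi$ and $i\in\{1,\dots,k\}$ (with $k-i$, resp. $i$, copies of $a$), and satisfies: $d_H(p)\le d_H(p')$ whenever the set of distinct entries of $p$ is a proper subset of that of $p'$, and $d_H(p)\le\gamma d_H(p')$ whenever these sets are equal. An instance is $\sigma=(V,\mathrm{atime},\mathrm{pos})$ with $V=\{u_1,\ldots,u_m\}$ ($m$ a multiple of $k$), nondecreasing arrival times $\mathrm{atime}:V\to\mathbb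 R_{\ge0}$ and positions $\mathrm{pos}:V\to\chi$. The metric $d$ on $\chi$ is $d(p,q):=d_H(p,q,\ldots,q)+d_H(q,p,\ldots,p)$ (first argument once, second $k-1$ times); $E$ is the set of unordered pairs of distinct requests, $\mathrm{opt\text{-}cost}(\{u,w\}):=d(\mathrm{pos}(u),\mathrm{pos}(w))+|\mathrm{atime}(u)-\mathrm{atime}(w)|$; for $S\subseteq V$, $\mathrm{sur}(S):=|S|\bmod k$ and $\delta(S)$ is the set of pairs with exactly one element in $S$. The LP $(\mathcal D')$ is: maximize $\sum_{S\subseteq V}\mathrm{sur}(S)(k-\mathrm{sur}(S))y_S$ subject to $\sum_{S:e\in\delta(S)}y_S\le\frac{1}{\gamma k^2}\mathrm{opt\text{-}cost}(e)$ for all $e\in E$ and $y_S\ge0$ for all $S\subseteq V$. Algorithm GD-$k$ (Greedy Dual for $k$-MPMD) runs in continuous time from $0$. It maintains: a partition of the already-arrived requests into "active sets" ($A(v)$ denotes the active set containing $v$); a family $\mathcal M$ of disjoint $k$-element sets of requests (the groups matched so far); a request is free if it lies in no set of $\mathcal M$, and $\mathrm{free}(S)$ is the set of free requests of $S$; and dual values $y_S(\tau)\ge0$ for $S\subseteq V$, all initially $0$. When a request $v$ arrives, $A(v):=\{v\}$ is created. At every moment, for each active set $S$ with $\mathrm{free}(S)\ne\emptyset$, $y_S$ increases continuously at rate $r$; all other $y_S$ stay constant. Whenever a pair $e=\{u,w\}$ of arrived requests with $A(u)\ne A(w)$ becomes tight, i.e. $\sum_{S:e\in\delta(S)}y_S=\frac{1}{\gamma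 k^2}\mathrm{opt\text{-}cost}(e)$, the algorithm replaces $A(u)$ and $A(w)$ by the single active set $S=A(u)\cup A(w)$, marks $e$, and, while $|\mathrm{free}(S)|\ge k$, chooses arbitrarily $k$ free requests of $S$ and adds them as a group to $\mathcal M$ (they are matched at the current time). *)

theory Defs
  imports Complex_Main "HOL-Library.Multiset"
begin

definition hmetric :: "nat \<Rightarrow> nat \<Rightarrow> ('x list \<Rightarrow> real) \<Rightarrow> bool" where
  "hmetric k \<gamma> dH \<longleftrightarrow>
     (\<forall>p. length p = k \<longrightarrow> 0 \<le> dH p) \<and>
     (\<forall>p q. length p = k \<longrightarrow> mset q = mset p \<longrightarrow> dH q = dH p) \<and>
     (\<forall>p. length p = k \<longrightarrow> (dH p = 0 \<longleftrightarrow> (\<forall>i<k. \<forall>j<k. p ! i = p ! j))) \<and>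
     (\<forall>p a i. length p = k \<longrightarrow> 1 \<le> i \<longrightarrow> i \<le> k \<longrightarrow>
        dH p \<le> dH (take i p @ replicate (k - i) a) + dH (replicate i a @ drop i p)) \<and>
     (\<forall>p p'. length p = k \<longrightarrow> length p' = k \<longrightarrow> set p \<subset> set p' \<longrightarrow> dH p \<le> dH p') \<and>
     (\<forall>p p'. length p = k \<longrightarrow> length p' = k \<longrightarrow> set p = set p' \<longrightarrow> dH p \<le> real \<gamma> * dH p')"

definition hdist :: "nat \<Rightarrow> ('x list \<Rightarrow> real) \<Rightarrow> 'x \<Rightarrow> 'x \<Rightarrow> real" where
  "hdist k dH p q = dH (p # replicate (k - 1) q) + dH (q # replicate (k - 1) p)"

definition opt_cost :: "nat \<Rightarrow> ('x list \<Rightarrow> real) \<Rightarrow> ('v \<Rightarrow> real) \<Rightarrow> ('v \<Rightarrow> 'x) \<Rightarrow> 'v \<Rightarrow> 'v \<Rightarrow> real" where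
  "opt_cost k dH atime pos u w = hdist k dH (pos u) (pos w) + \<bar>atime u - atime w\<bar>"

text \<open>Distance cost of a group (a finite set of requests), via any enumeration of it.\<close>
definition gcost :: "('x list \<Rightarrow> real) \<Rightarrow> ('v \<Rightarrow> 'x) \<Rightarrow> 'v set \<Rightarrow> real" where
  "gcost dH pos G = dH (map pos (SOME xs. distinct xs \<and> set xs = G))"

definition edges :: "'v set \<Rightarrow> 'v set set" where
  "edges V = {{u, w} | u w. u \<in> V \<and> w \<in> V \<and> u \<noteq> w}"

definition delta :: "'v set \<Rightarrow> 'v set \<Rightarrow> 'v set set" where
  "delta V S = {e \<in> edges V. card (e \<inter> S) = 1}"

definition sur :: "nat \<Rightarrow> 'v set \<Rightarrow> nat" where
  "sur k S = card S mod k"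

definition dual_obj :: "nat \<Rightarrow> 'v set \<Rightarrow> ('v set \<Rightarrow> real) \<Rightarrow> real" where
  "dual_obj k V y = (\<Sum>S\<in>Pow V. real (sur k S * (k - sur k S)) * y S)"

definition load :: "'v set \<Rightarrow> ('v set \<Rightarrow> real) \<Rightarrow> 'v \<Rightarrow> 'v \<Rightarrow> real" where
  "load V y u w = (\<Sum>S\<in>{S\<in>Pow V. {u, w} \<in> delta V S}. y S)"

definition dual_feasible ::
  "nat \<Rightarrow> nat \<Rightarrow> ('x list \<Rightarrow> real) \<Rightarrow> 'v set \<Rightarrow> ('v \<Rightarrow> real) \<Rightarrow> ('v \<Rightarrow> 'x) \<Rightarrow> ('v set \<Rightarrow> real) \<Rightarrow> bool" where
  "dual_feasible k \<gamma> dH V atime pos y \<longleftrightarrow>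
     (\<forall>S. S \<subseteq> V \<longrightarrow> 0 \<le> y S) \<and>
     (\<forall>u\<in>V. \<forall>w\<in>V. u \<noteq> w \<longrightarrow>
        load V y u w \<le> opt_cost k dH atime pos u w / (real \<gamma> * real k ^ 2))"

definition dual_opt ::
  "nat \<Rightarrow> nat \<Rightarrow> ('x list \<Rightarrow> real) \<Rightarrow> 'v set \<Rightarrow> ('v \<Rightarrow> real) \<Rightarrow> ('v \<Rightarrow> 'x) \<Rightarrow> real" where
  "dual_opt k \<gamma> dH V atime pos =
     Sup (dual_obj k V ` {y. dual_feasible k \<gamma> dH V atime pos y})"

record 'v gd_state =
  time :: real
  act :: "'v set set"
  mat :: "'v set set"
  dual :: "'v set \<Rightarrow> real"

definition gd_init :: "'v gd_state" where
  "gd_init = \<lparr>time = 0, act = {}, mat = {}, dual = (\<lambda>_. 0)\<rparr>"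

definition free :: "'v gd_state \<Rightarrow> 'v set \<Rightarrow> 'v set" where
  "free st S = S - \<Union>(mat st)"

definition crossing :: "'v gd_state \<Rightarrow> 'v \<Rightarrow> 'v \<Rightarrow> bool" where
  "crossing st u w \<longleftrightarrow> (\<exists>S1\<in>act st. \<exists>S2\<in>act st. S1 \<noteq> S2 \<and> u \<in> S1 \<and> w \<in> S2)"

text \<open>One step of GD-k with rate r:
  arrival of a request at its arrival time;
  merging of the active sets of a tight pair (followed by greedy grouping of free requests);
  continuous advance of time (only allowed if no crossing pair is tight at the start,
  no arrival is skipped, and no constraint of a crossing pair is violated at the end).\<close>
definition gd_step ::
  "nat \<Rightarrow> nat \<Rightarrow> ('x list \<Rightarrow> real) \<Rightarrow> 'v set \<Rightarrow> ('v \<Rightarrow> real) \<Rightarrow> ('v \<Rightarrow> 'x) \<Rightarrow> real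
   \<Rightarrow> 'v gd_state \<Rightarrow> 'v gd_state \<Rightarrow> bool" where
  "gd_step k \<gamma> dH V atime pos r st st' \<longleftrightarrow>
     (\<exists>v\<in>V. v \<notin> \<Union>(act st) \<and> atime v = time st \<and>
        st' = st\<lparr>act := insert {v} (act st)\<rparr>)
   \<or> (\<exists>S1 S2 u w G. S1 \<in> act st \<and> S2 \<in> act st \<and> S1 \<noteq> S2 \<and> u \<in> S1 \<and> w \<in> S2 \<and>
        load V (dual st) u w = opt_cost k dH atime pos u w / (real \<gamma> * real k ^ 2) \<and>
        (\<forall>g\<in>G. g \<subseteq> free st (S1 \<union> S2) \<and> card g = k) \<and>
        (\<forall>g1\<in>G. \<forall>g2\<in>G. g1 \<noteq> g2 \<longrightarrow> g1 \<inter> g2 = {}) \<and>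
        card (free st (S1 \<union> S2) - \<Union>G) < k \<and>
        st' = st\<lparr>act := insert (S1 \<union> S2) (act st - {S1, S2}), mat := mat st \<union> G\<rparr>)
   \<or> (\<exists>t'. time st < t' \<and>
        (\<forall>v\<in>V. atime v < t' \<longrightarrow> v \<in> \<Union>(act st)) \<and>
        (\<forall>u w. crossing st u w \<longrightarrow>
           load V (dual st) u w \<noteq> opt_cost k dH atime pos u w / (real \<gamma> * real k ^ 2)) \<and>
        st' = st\<lparr>time := t',
                 dual := (\<lambda>S. if S \<in> act st \<and> free st S \<noteq> {}
                              then dual st S + r * (t' - time st) else dual st S)\<rparr> \<and>
        (\<forall>u w. crossing st' u w \<longrightarrow>
           load V (dual st') u w \<le> opt_cost k dH atime pos u w / (real \<gamma> * real k ^ 2)))"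

end

theory Submission
  imports Defs
begin



lemma hm_nonneg: "hmetric k g dH \<Longrightarrow> length p = k \<Longrightarrow> 0 \<le> dH p"
  unfolding hmetric_def by blast
lemma hm_perm: "hmetric k g dH \<Longrightarrow> length p = k \<Longrightarrow> mset q = mset p \<Longrightarrow> dH q = dH p"
  unfolding hmetric_def by blast
lemma hm_zero: assumes "hmetric k g dH" shows "dH (replicate k a) = 0"
proof -
  have z: "\<forall>p. length p = k \<longrightarrow> (dH p = 0 \<longleftrightarrow> (\<forall>i<k. \<forall>j<k. p ! i = p ! j))"
    using assms unfolding hmetric_def by blast
  show ?thesis using z[rule_format, of "replicate k a"] by simp
qed
lemma hm_tri1: "hmetric k g dH \<Longrightarrow> length p = k \<Longrightarrow> 1 \<le> k \<Longrightarrow>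
   dH p \<le> dH (take 1 p @ replicate (k - 1) a) + dH (a # drop 1 p)"
proof -
  assume h: "hmetric k g dH" and l: "length p = k" and k: "1 \<le> k"
  have t: "\<forall>p a i. length p = k \<longrightarrow> 1 \<le> i \<longrightarrow> i \<le> k \<longrightarrow>
        dH p \<le> dH (take i p @ replicate (k - i) a) + dH (replicate i a @ drop i p)"
    using h unfolding hmetric_def by blast
  show ?thesis using t[rule_format, of p 1 a] l k by simp
qed

lemma hdist_nonneg: "hmetric k g dH \<Longrightarrow> 1 \<le> k \<Longrightarrow> 0 \<le> hdist k dH x y"
  unfolding hdist_def using hm_nonneg[of k g dH] by (simp add: add_nonneg_nonneg)

lemma hdist_refl: "hmetric k g dH \<Longrightarrow> 1 \<le> k \<Longrightarrow> hdist k dH x x = 0"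
proof -
  assume h: "hmetric k g dH" and k: "1 \<le> k"
  have "x # replicate (k - 1) x = replicate k x" using k
    by (metis Suc_diff_le diff_Suc_1 replicate_Suc)
  thus ?thesis unfolding hdist_def using hm_zero[OF h] by simp
qed

lemma hdist_sym: "hdist k dH x y = hdist k dH y x"
  unfolding hdist_def by simp

lemma hm_tri_pt: assumes h: "hmetric k g dH" and k: "1 \<le> k"
  shows "dH (x # replicate (k - 1) z) \<le> dH (x # replicate (k - 1) y) + dH (y # replicate (k - 1) z)"
proof -
  have "length (x # replicate (k - 1) z) = k" using k by simp
  from hm_tri1[OF h this k, of y] show ?thesis by simp
qed

lemma hdist_tri: assumes h: "hmetric k g dH" and k: "1 \<le> k"
  shows "hdist k dH x z \<le> hdist k dH x y + hdist k dH y z"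
  unfolding hdist_def using hm_tri_pt[OF h k, of x z y] hm_tri_pt[OF h k, of z x y] by simp

lemma hm_group: assumes h: "hmetric k g dH" and k: "1 \<le> k" and len: "length p = k"
  shows "dH p \<le> (\<Sum>i<k. hdist k dH (p ! i) a)"
proof -
  have step: "dH (replicate j a @ drop j p) \<le> dH (p!j # replicate (k-1) a) + dH (replicate (Suc j) a @ drop (Suc j) p)"
    if j: "j < k" for j
  proof -
    let ?r = "p!j # (replicate j a @ drop (Suc j) p)"
    have d: "drop j p = p!j # drop (Suc j) p" using j len by (simp add: Cons_nth_drop_Suc)
    have lr: "length ?r = k" using j len by simp
    have "mset (replicate j a @ drop j p) = mset ?r" by (simp add: d)
    hence "dH (replicate j a @ drop j p) = dH ?r" by (rule hm_perm[OF h lr])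
    also have "\<dots> \<le> dH (take 1 ?r @ replicate (k-1) a) + dH (a # drop 1 ?r)"
      using hm_tri1[OF h lr k] by simp
    finally show ?thesis by simp
  qed
  have main: "n \<le> k \<Longrightarrow> dH p \<le> (\<Sum>i<n. dH (p!i # replicate (k-1) a)) + dH (replicate n a @ drop n p)" for n
  proof (induction n)
    case 0 thus ?case by simp
  next
    case (Suc n)
    hence "dH p \<le> (\<Sum>i<n. dH (p!i # replicate (k-1) a)) + dH (replicate n a @ drop n p)" by simp
    also have "\<dots> \<le> (\<Sum>i<n. dH (p!i # replicate (k-1) a)) + (dH (p!n # replicate (k-1) a) + dH (replicate (Suc n) a @ drop (Suc n) p))"
      using step[of n] Suc.prems by simp
    finally show ?case by simp
  qed
  have "dH p \<le> (\<Sum>i<k. dH (p!i # replicate (k-1) a))"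
    using main[of k] len hm_zero[OF h, of a] by simp
  also have "\<dots> \<le> (\<Sum>i<k. hdist k dH (p ! i) a)"
    apply (rule sum_mono) unfolding hdist_def using hm_nonneg[OF h, of "a # replicate (k-1) _"] k by simp
  finally show ?thesis .
qed




lemma card_pair_inter: "u \<noteq> w \<Longrightarrow> (card ({u,w} \<inter> S) = 1) = ((u\<in>S) \<noteq> (w\<in>S))"
proof -
  assume uw: "u \<noteq> w"
  consider "u \<in> S" "w \<in> S" | "u \<in> S" "w \<notin> S" | "u \<notin> S" "w \<in> S" | "u \<notin> S" "w \<notin> S" by blast
  thus ?thesis
  proof cases
    case 1 hence "{u,w} \<inter> S = {u,w}" by blast thus ?thesis using 1 uw by simp
  next
    case 2 hence "{u,w} \<inter> S = {u}" by blast thus ?thesis using 2 by simp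
  next
    case 3 hence "{u,w} \<inter> S = {w}" by blast thus ?thesis using 3 by simp
  next
    case 4 hence "{u,w} \<inter> S = {}" by blast thus ?thesis using 4 by simp
  qed
qed

lemma load_alt: assumes "u \<in> V" "w \<in> V" "u \<noteq> w" "finite V"
  shows "load V y u w = (\<Sum>S\<in>Pow V. if (u\<in>S) \<noteq> (w\<in>S) then y S else 0)"
proof -
  have "load V y u w = (\<Sum>S\<in>Pow V. if {u, w} \<in> delta V S then y S else 0)"
    unfolding load_def by (rule sum.inter_filter) (simp add: assms(4))
  also have "\<dots> = (\<Sum>S\<in>Pow V. if (u\<in>S) \<noteq> (w\<in>S) then y S else 0)"
  proof (rule sum.cong)
    fix S assume "S \<in> Pow V"
    have "{u,w} \<in> edges V" using assms unfolding edges_def by blast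
    hence "({u, w} \<in> delta V S) = ((u\<in>S) \<noteq> (w\<in>S))"
      unfolding delta_def using card_pair_inter[OF assms(3)] by simp
    thus "(if {u, w} \<in> delta V S then y S else 0) = (if (u\<in>S) \<noteq> (w\<in>S) then y S else 0)" by simp
  qed simp
  finally show ?thesis .
qed

lemma nat_prod_bound: "1 \<le> (s::nat) \<Longrightarrow> s < k \<Longrightarrow> k - 1 \<le> s * (k - s)"
proof -
  assume a: "1 \<le> s" "s < k"
  then obtain a' where s: "s = Suc a'" by (cases s) auto
  have "s * (k - s) = (k - s) + a' * (k - s)" using s by simp
  moreover have "1 \<le> k - s" using a by simp
  hence "a' \<le> a' * (k - s)" using mult_le_mono2[of 1 "k - s" a'] by simp
  ultimately show ?thesis using a s by linarith
qed

locale gdk =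
  fixes k g :: nat and dH :: "'x list \<Rightarrow> real" and V :: "'v set"
    and atime :: "'v \<Rightarrow> real" and pos :: "'v \<Rightarrow> 'x"
  assumes k2: "2 \<le> k" and g1: "1 \<le> g" and hm: "hmetric k g dH" and finV: "finite V"
    and at0: "\<forall>v\<in>V. 0 \<le> atime v"
begin

definition KK :: real where "KK = real g * real k ^ 2"

lemma KK_pos: "0 < KK"
  unfolding KK_def using k2 g1 by simp

lemma k1: "1 \<le> k" using k2 by simp

definition cc :: "'v set \<Rightarrow> 'v \<Rightarrow> 'v \<Rightarrow> real" where
  "cc S x z = (if x \<in> S \<and> z \<in> S then 0 else if x \<in> S \<or> z \<in> S then 1 else 2)"

definition cw :: "'v set \<Rightarrow> 'v \<Rightarrow> 'v \<Rightarrow> 'v set \<Rightarrow> real" where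
  "cw A x z S = (if S \<subseteq> A then cc S x z else 0)"

lemma cw_nonneg: "0 \<le> cw A x z S" unfolding cw_def cc_def by auto
lemma cw_le2: "cw A x z S \<le> 2" unfolding cw_def cc_def by auto
lemma cw_sym: "cw A x z S = cw A z x S" unfolding cw_def cc_def by auto

definition gdinv :: "'v gd_state \<Rightarrow> bool" where
  "gdinv st \<longleftrightarrow>
    (\<forall>A\<in>act st. A \<noteq> {} \<and> A \<subseteq> V) \<and>
    (\<forall>A\<in>act st. \<forall>B\<in>act st. A \<noteq> B \<longrightarrow> A \<inter> B = {}) \<and>
    (\<Union>(mat st) \<subseteq> \<Union>(act st)) \<and>
    (\<forall>G\<in>mat st. card G = k \<and> (\<exists>A\<in>act st. G \<subseteq> A)) \<and>
    (\<forall>G1\<in>mat st. \<forall>G2\<in>mat st. G1 \<noteq> G2 \<longrightarrow> G1 \<inter> G2 = {}) \<and>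
    (\<forall>A\<in>act st. k dvd card (A \<inter> \<Union>(mat st))) \<and>
    (\<forall>A\<in>act st. card (free st A) < k) \<and>
    (\<forall>S. 0 \<le> dual st S) \<and>
    (\<forall>S. dual st S \<noteq> 0 \<longrightarrow> S \<noteq> {} \<and> (\<exists>A\<in>act st. S \<subseteq> A) \<and> card S mod k \<noteq> 0) \<and>
    (\<forall>A\<in>act st. \<forall>x\<in>A. \<forall>z\<in>A. hdist k dH (pos x) (pos z) \<le> KK * (\<Sum>S\<in>Pow V. dual st S * cw A x z S)) \<and>
    (\<forall>u\<in>\<Union>(act st). (\<Sum>S\<in>Pow V. if u \<in> S then dual st S else 0) \<le> (time st - atime u) / KK) \<and>
    (\<forall>w\<in>V - \<Union>(act st). time st \<le> atime w) \<and>
    (\<forall>u\<in>\<Union>(act st). \<forall>w\<in>\<Union>(act st). u \<noteq> w \<longrightarrow> load V (dual st) u w \<le> opt_cost k dH atime pos u w / KK) \<and>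
    0 \<le> time st"

lemma gdinvD: assumes "gdinv st" shows
    "\<forall>A\<in>act st. A \<noteq> {} \<and> A \<subseteq> V"
    "\<forall>A\<in>act st. \<forall>B\<in>act st. A \<noteq> B \<longrightarrow> A \<inter> B = {}"
    "\<Union>(mat st) \<subseteq> \<Union>(act st)"
    "\<forall>G\<in>mat st. card G = k \<and> (\<exists>A\<in>act st. G \<subseteq> A)"
    "\<forall>G1\<in>mat st. \<forall>G2\<in>mat st. G1 \<noteq> G2 \<longrightarrow> G1 \<inter> G2 = {}"
    "\<forall>A\<in>act st. k dvd card (A \<inter> \<Union>(mat st))"
    "\<forall>A\<in>act st. card (free st A) < k"
    "\<forall>S. 0 \<le> dual st S"
    "\<forall>S. dual st S \<noteq> 0 \<longrightarrow> S \<noteq> {} \<and> (\<exists>A\<in>act st. S \<subseteq> A) \<and> card S mod k \<noteq> 0"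
    "\<forall>A\<in>act st. \<forall>x\<in>A. \<forall>z\<in>A. hdist k dH (pos x) (pos z) \<le> KK * (\<Sum>S\<in>Pow V. dual st S * cw A x z S)"
    "\<forall>u\<in>\<Union>(act st). (\<Sum>S\<in>Pow V. if u \<in> S then dual st S else 0) \<le> (time st - atime u) / KK"
    "\<forall>w\<in>V - \<Union>(act st). time st \<le> atime w"
    "\<forall>u\<in>\<Union>(act st). \<forall>w\<in>\<Union>(act st). u \<noteq> w \<longrightarrow> load V (dual st) u w \<le> opt_cost k dH atime pos u w / KK"
    "0 \<le> time st"
  by (insert assms[unfolded gdinv_def], elim conjE, assumption)+

lemma inv_init: "gdinv gd_init"
  unfolding gdinv_def gd_init_def
  apply (simp only: gd_state.select_convs)
  apply (intro conjI)
  using at0 by simp_all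

end


context gdk begin

lemma sum_nonneg_dual: "\<forall>S. 0 \<le> y S \<Longrightarrow> 0 \<le> (\<Sum>S\<in>Pow V. y S * cw A x z S)"
  by (intro sum_nonneg mult_nonneg_nonneg cw_nonneg) auto

lemma inv_arrival:
  assumes I: "gdinv st" and v: "v \<in> V" "v \<notin> \<Union>(act st)" "atime v = time st"
    and st': "st' = st\<lparr>act := insert {v} (act st)\<rparr>"
  shows "gdinv st'"
proof -
  note I1 = gdinvD(1)[OF I] and I2 = gdinvD(2)[OF I] and I3 = gdinvD(3)[OF I]
    and I4 = gdinvD(4)[OF I] and I5 = gdinvD(5)[OF I] and I6 = gdinvD(6)[OF I]
    and I7 = gdinvD(7)[OF I] and I8 = gdinvD(8)[OF I] and I9 = gdinvD(9)[OF I]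
    and I10 = gdinvD(10)[OF I] and I11 = gdinvD(11)[OF I] and I12 = gdinvD(12)[OF I]
    and I13 = gdinvD(13)[OF I] and I14 = gdinvD(14)[OF I]
  have a: "act st' = insert {v} (act st)" and m: "mat st' = mat st" and d: "dual st' = dual st"
    and t: "time st' = time st" using st' by simp_all
  have fr: "free st' A = free st A" for A unfolding free_def m ..
  have vm: "v \<notin> \<Union>(mat st)" using I3 v(2) by blast
  have vS: "dual st S \<noteq> 0 \<Longrightarrow> v \<notin> S" for S using I9 v(2) by blast
  have J1: "\<forall>A\<in>act st'. A \<noteq> {} \<and> A \<subseteq> V" unfolding a using I1 v(1) by blast
  have J2: "\<forall>A\<in>act st'. \<forall>B\<in>act st'. A \<noteq> B \<longrightarrow> A \<inter> B = {}" unfolding a using I2 v(2) by blast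
  have J3: "\<Union>(mat st') \<subseteq> \<Union>(act st')" unfolding a m using I3 by blast
  have J4: "\<forall>G\<in>mat st'. card G = k \<and> (\<exists>A\<in>act st'. G \<subseteq> A)" unfolding a m using I4 by blast
  have J5: "\<forall>G1\<in>mat st'. \<forall>G2\<in>mat st'. G1 \<noteq> G2 \<longrightarrow> G1 \<inter> G2 = {}" unfolding m using I5 by simp
  have J6: "\<forall>A\<in>act st'. k dvd card (A \<inter> \<Union>(mat st'))"
  proof
    fix A assume "A \<in> act st'"
    then consider "A = {v}" | "A \<in> act st" using a by auto
    thus "k dvd card (A \<inter> \<Union>(mat st'))"
    proof cases
      case 1 hence "A \<inter> \<Union>(mat st') = {}" using vm unfolding m by blast
      thus ?thesis by simp
    next
      case 2 thus ?thesis using I6 unfolding m by simp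
    qed
  qed
  have J7: "\<forall>A\<in>act st'. card (free st' A) < k"
  proof
    fix A assume "A \<in> act st'"
    then consider "A = {v}" | "A \<in> act st" using a by auto
    thus "card (free st' A) < k"
    proof cases
      case 1 hence "free st' A = {v}" using vm unfolding free_def m by blast
      thus ?thesis using k2 by simp
    next
      case 2 thus ?thesis using I7 fr by simp
    qed
  qed
  have J8: "\<forall>S. 0 \<le> dual st' S" unfolding d using I8 by simp
  have J9: "\<forall>S. dual st' S \<noteq> 0 \<longrightarrow> S \<noteq> {} \<and> (\<exists>A\<in>act st'. S \<subseteq> A) \<and> card S mod k \<noteq> 0"
    unfolding a d using I9 by blast
  have J10: "\<forall>A\<in>act st'. \<forall>x\<in>A. \<forall>z\<in>A. hdist k dH (pos x) (pos z) \<le> KK * (\<Sum>S\<in>Pow V. dual st' S * cw A x z S)"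
  proof (intro ballI)
    fix A x z assume A: "A \<in> act st'" and x: "x \<in> A" and z: "z \<in> A"
    from A consider "A = {v}" | "A \<in> act st" using a by auto
    thus "hdist k dH (pos x) (pos z) \<le> KK * (\<Sum>S\<in>Pow V. dual st' S * cw A x z S)"
    proof cases
      case 1
      hence "x = z" using x z by simp
      hence "hdist k dH (pos x) (pos z) = 0" using hdist_refl[OF hm k1] by simp
      moreover have "0 \<le> KK * (\<Sum>S\<in>Pow V. dual st' S * cw A x z S)"
        using KK_pos sum_nonneg_dual J8 by simp
      ultimately show ?thesis by simp
    next
      case 2 thus ?thesis using I10 x z unfolding d by simp
    qed
  qed
  have zero_v: "(\<Sum>S\<in>Pow V. if v \<in> S then dual st S else 0) = 0"
    by (rule sum.neutral) (use vS in auto)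
  have J11: "\<forall>u\<in>\<Union>(act st'). (\<Sum>S\<in>Pow V. if u \<in> S then dual st' S else 0) \<le> (time st' - atime u) / KK"
  proof
    fix u assume "u \<in> \<Union>(act st')"
    then consider "u = v" | "u \<in> \<Union>(act st)" using a by auto
    thus "(\<Sum>S\<in>Pow V. if u \<in> S then dual st' S else 0) \<le> (time st' - atime u) / KK"
    proof cases
      case 1 thus ?thesis using zero_v v(3) unfolding d t by simp
    next
      case 2 thus ?thesis using I11 unfolding d t by blast
    qed
  qed
  have J12: "\<forall>w\<in>V - \<Union>(act st'). time st' \<le> atime w" unfolding a t using I12 by blast
  have new: "load V (dual st) u v \<le> opt_cost k dH atime pos u v / KK" if u: "u \<in> \<Union>(act st)" for u
  proof -
    have uV: "u \<in> V" using u I1 by blast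
    have uv: "u \<noteq> v" using u v(2) by blast
    have "load V (dual st) u v = (\<Sum>S\<in>Pow V. if (u\<in>S) \<noteq> (v\<in>S) then dual st S else 0)"
      by (rule load_alt[OF uV v(1) uv finV])
    also have "\<dots> \<le> (\<Sum>S\<in>Pow V. if u \<in> S then dual st S else 0)"
    proof (rule sum_mono)
      fix S assume "S \<in> Pow V"
      show "(if (u\<in>S) \<noteq> (v\<in>S) then dual st S else 0) \<le> (if u \<in> S then dual st S else 0)"
      proof (cases "dual st S = 0")
        case True thus ?thesis by simp
      next
        case False thus ?thesis using vS[OF False] by simp
      qed
    qed
    also have "\<dots> \<le> (time st - atime u) / KK" using I11 u by blast
    also have "\<dots> \<le> opt_cost k dH atime pos u v / KK"
    proof (rule divide_right_mono)
      show "0 \<le> KK" using KK_pos by simp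
      have "0 \<le> hdist k dH (pos u) (pos v)" by (rule hdist_nonneg[OF hm k1])
      thus "time st - atime u \<le> opt_cost k dH atime pos u v"
        unfolding opt_cost_def using v(3) by linarith
    qed
    finally show ?thesis .
  qed
  have J13: "\<forall>u\<in>\<Union>(act st'). \<forall>w\<in>\<Union>(act st'). u \<noteq> w \<longrightarrow> load V (dual st') u w \<le> opt_cost k dH atime pos u w / KK"
  proof (intro ballI impI)
    fix u w assume u: "u \<in> \<Union>(act st')" and w: "w \<in> \<Union>(act st')" and uw: "u \<noteq> w"
    have u': "u = v \<or> u \<in> \<Union>(act st)" and w': "w = v \<or> w \<in> \<Union>(act st)" using u w a by auto
    show "load V (dual st') u w \<le> opt_cost k dH atime pos u w / KK"
    proof (cases "u = v")
      case True
      hence "w \<in> \<Union>(act st)" using w' uw by simp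
      moreover have "load V (dual st) u w = load V (dual st) w u" unfolding load_def by (simp add: insert_commute)
      moreover have "opt_cost k dH atime pos u w = opt_cost k dH atime pos w u"
        unfolding opt_cost_def using hdist_sym by (simp add: abs_minus_commute)
      ultimately show ?thesis using new[of w] True unfolding d by simp
    next
      case False
      hence uu: "u \<in> \<Union>(act st)" using u' by simp
      show ?thesis
      proof (cases "w = v")
        case True thus ?thesis using new[OF uu] unfolding d by simp
      next
        case False hence "w \<in> \<Union>(act st)" using w' by simp
        thus ?thesis using I13 uu uw unfolding d by blast
      qed
    qed
  qed
  have J14: "0 \<le> time st'" unfolding t using I14 by simp
  show ?thesis unfolding gdinv_def
    by (insert J1 J2 J3 J4 J5 J6 J7 J8 J9 J10 J11 J12 J13 J14, intro conjI; assumption)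
qed

end



lemma card_Union_k: assumes "\<forall>g\<in>G. card g = k" "0 < k"
  "\<forall>g1\<in>G. \<forall>g2\<in>G. g1 \<noteq> g2 \<longrightarrow> g1 \<inter> g2 = {}"
  shows "card (\<Union>G) = k * card G"
proof -
  have "pairwise disjnt G" using assms(3) unfolding pairwise_def disjnt_def by blast
  moreover have "\<And>g. g \<in> G \<Longrightarrow> finite g" using assms(1,2) card_ge_0_finite by metis
  ultimately have "card (\<Union>G) = sum card G" by (rule card_Union_disjoint)
  also have "\<dots> = sum (\<lambda>_. k) G" using assms(1) by simp
  finally show ?thesis by simp
qed

context gdk begin

lemma merge_cross:
  assumes I: "gdinv st" and S: "S1 \<in> act st" "S2 \<in> act st" "S1 \<noteq> S2" and u: "u \<in> S1" and w: "w \<in> S2"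
    and tight: "load V (dual st) u w = opt_cost k dH atime pos u w / KK"
    and x: "x \<in> S1" and z: "z \<in> S2"
  shows "hdist k dH (pos x) (pos z) \<le> KK * (\<Sum>S\<in>Pow V. dual st S * cw (S1 \<union> S2) x z S)"
proof -
  note I1 = gdinvD(1)[OF I] and I2 = gdinvD(2)[OF I] and I8 = gdinvD(8)[OF I] and I9 = gdinvD(9)[OF I]
    and I10 = gdinvD(10)[OF I]
  have dis: "S1 \<inter> S2 = {}" using I2 S by blast
  have uV: "u \<in> V" and wV: "w \<in> V" using I1 S u w by blast+
  have uw: "u \<noteq> w" using dis u w by blast
  let ?d = "hdist k dH"
  have h1: "?d (pos x) (pos z) \<le> ?d (pos x) (pos u) + ?d (pos u) (pos w) + ?d (pos w) (pos z)"
    using hdist_tri[OF hm k1, of "pos x" "pos z" "pos u"] hdist_tri[OF hm k1, of "pos u" "pos z" "pos w"] by linarith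
  have "opt_cost k dH atime pos u w = KK * load V (dual st) u w" using tight KK_pos by simp
  hence h2: "?d (pos u) (pos w) \<le> KK * (\<Sum>S\<in>Pow V. if (u\<in>S) \<noteq> (w\<in>S) then dual st S else 0)"
    unfolding load_alt[OF uV wV uw finV] opt_cost_def by linarith
  have hx: "?d (pos x) (pos u) \<le> KK * (\<Sum>S\<in>Pow V. dual st S * cw S1 x u S)" using I10 S x u by blast
  have hz: "?d (pos w) (pos z) \<le> KK * (\<Sum>S\<in>Pow V. dual st S * cw S2 w z S)" using I10 S w z by blast
  have pt: "dual st S * cw S1 x u S + (if (u\<in>S) \<noteq> (w\<in>S) then dual st S else 0) + dual st S * cw S2 w z S
      \<le> dual st S * cw (S1 \<union> S2) x z S" for S
  proof (cases "dual st S = 0")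
    case True thus ?thesis by simp
  next
    case False
    then obtain T where T: "T \<in> act st" "S \<subseteq> T" and Sne: "S \<noteq> {}" using I9 by blast
    have y0: "0 \<le> dual st S" using I8 by simp
    consider "T = S1" | "T = S2" | "T \<noteq> S1" "T \<noteq> S2" by blast
    thus ?thesis
    proof cases
      case 1
      hence sub: "S \<subseteq> S1" using T by simp
      hence nw: "w \<notin> S" "z \<notin> S" using dis w z by blast+
      have ns2: "\<not> S \<subseteq> S2" using sub dis Sne by blast
      have e: "cw S1 x u S = cc S x u" "cw S2 w z S = 0" "cw (S1 \<union> S2) x z S = cc S x z"
        unfolding cw_def using sub ns2 by auto
      show ?thesis unfolding e using y0 nw
        by (cases "x \<in> S"; cases "u \<in> S") (simp_all add: cc_def)
    next
      case 2
      hence sub: "S \<subseteq> S2" using T by simp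
      hence nw: "u \<notin> S" "x \<notin> S" using dis u x by blast+
      have ns2: "\<not> S \<subseteq> S1" using sub dis Sne by blast
      have e: "cw S1 x u S = 0" "cw S2 w z S = cc S w z" "cw (S1 \<union> S2) x z S = cc S x z"
        unfolding cw_def using sub ns2 by auto
      show ?thesis unfolding e using y0 nw
        by (cases "z \<in> S"; cases "w \<in> S") (simp_all add: cc_def)
    next
      case 3
      have "T \<inter> S1 = {}" "T \<inter> S2 = {}" using I2 T(1) S 3 by blast+
      hence nn: "u \<notin> S" "w \<notin> S" "\<not> S \<subseteq> S1" "\<not> S \<subseteq> S2" using T(2) u w Sne by blast+
      have "0 \<le> dual st S * cw (S1 \<union> S2) x z S" using y0 cw_nonneg by simp
      thus ?thesis using nn unfolding cw_def by simp
    qed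
  qed
  have "(\<Sum>S\<in>Pow V. dual st S * cw S1 x u S) + (\<Sum>S\<in>Pow V. if (u\<in>S) \<noteq> (w\<in>S) then dual st S else 0)
      + (\<Sum>S\<in>Pow V. dual st S * cw S2 w z S) \<le> (\<Sum>S\<in>Pow V. dual st S * cw (S1 \<union> S2) x z S)"
    using sum_mono[of "Pow V" _ "\<lambda>S. dual st S * cw (S1 \<union> S2) x z S", OF pt] by (simp add: sum.distrib)
  hence "KK * ((\<Sum>S\<in>Pow V. dual st S * cw S1 x u S) + (\<Sum>S\<in>Pow V. if (u\<in>S) \<noteq> (w\<in>S) then dual st S else 0)
      + (\<Sum>S\<in>Pow V. dual st S * cw S2 w z S)) \<le> KK * (\<Sum>S\<in>Pow V. dual st S * cw (S1 \<union> S2) x z S)"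
    using KK_pos by simp
  thus ?thesis using h1 h2 hx hz by (simp add: distrib_left)
qed

lemma merge_sub:
  assumes I: "gdinv st" and S: "S1 \<in> act st" and sub: "S1 \<subseteq> A" and x: "x \<in> S1" and z: "z \<in> S1"
  shows "hdist k dH (pos x) (pos z) \<le> KK * (\<Sum>S\<in>Pow V. dual st S * cw A x z S)"
proof -
  have "hdist k dH (pos x) (pos z) \<le> KK * (\<Sum>S\<in>Pow V. dual st S * cw S1 x z S)"
    using gdinvD(10)[OF I] S x z by blast
  also have "\<dots> \<le> KK * (\<Sum>S\<in>Pow V. dual st S * cw A x z S)"
  proof -
    have "(\<Sum>S\<in>Pow V. dual st S * cw S1 x z S) \<le> (\<Sum>S\<in>Pow V. dual st S * cw A x z S)"
    proof (rule sum_mono)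
      fix S
      have "cw S1 x z S \<le> cw A x z S" using sub cw_nonneg[of A x z S] unfolding cw_def by auto
      thus "dual st S * cw S1 x z S \<le> dual st S * cw A x z S"
        using gdinvD(8)[OF I] by (simp add: mult_left_mono)
    qed
    thus ?thesis using KK_pos by simp
  qed
  finally show ?thesis .
qed

end


context gdk begin

lemma inv_merge:
  assumes I: "gdinv st" and S: "S1 \<in> act st" "S2 \<in> act st" "S1 \<noteq> S2" and u: "u \<in> S1" and w: "w \<in> S2"
    and tight: "load V (dual st) u w = opt_cost k dH atime pos u w / KK"
    and G1: "\<forall>g\<in>G. g \<subseteq> free st (S1 \<union> S2) \<and> card g = k"
    and G2: "\<forall>g1\<in>G. \<forall>g2\<in>G. g1 \<noteq> g2 \<longrightarrow> g1 \<inter> g2 = {}"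
    and G3: "card (free st (S1 \<union> S2) - \<Union>G) < k"
    and st': "st' = st\<lparr>act := insert (S1 \<union> S2) (act st - {S1, S2}), mat := mat st \<union> G\<rparr>"
  shows "gdinv st'"
proof -
  note I1 = gdinvD(1)[OF I] and I2 = gdinvD(2)[OF I] and I3 = gdinvD(3)[OF I]
    and I4 = gdinvD(4)[OF I] and I5 = gdinvD(5)[OF I] and I6 = gdinvD(6)[OF I]
    and I7 = gdinvD(7)[OF I] and I8 = gdinvD(8)[OF I] and I9 = gdinvD(9)[OF I]
    and I10 = gdinvD(10)[OF I] and I11 = gdinvD(11)[OF I] and I12 = gdinvD(12)[OF I]
    and I13 = gdinvD(13)[OF I] and I14 = gdinvD(14)[OF I]
  define A where "A = S1 \<union> S2"
  have a: "act st' = insert A (act st - {S1, S2})" and m: "mat st' = mat st \<union> G" and d: "dual st' = dual st"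
    and t: "time st' = time st" using st' unfolding A_def by simp_all
  have dis: "S1 \<inter> S2 = {}" using I2 S by blast
  have AV: "A \<subseteq> V" using I1 S unfolding A_def by blast
  have GA: "\<Union>G \<subseteq> A - \<Union>(mat st)" using G1 unfolding free_def A_def by blast
  have Tdis: "T \<inter> A = {}" if "T \<in> act st" "T \<noteq> S1" "T \<noteq> S2" for T
    using I2 that S unfolding A_def by blast
  have actc: "T \<in> act st'" if "T \<in> act st" "T \<noteq> S1" "T \<noteq> S2" for T using that unfolding a by blast
  have cases_act: "T = A \<or> (T \<in> act st \<and> T \<noteq> S1 \<and> T \<noteq> S2)" if "T \<in> act st'" for T
    using that unfolding a by blast
  have up: "\<exists>B\<in>act st'. T \<subseteq> B" if "T \<in> act st" for T
  proof (cases "T = S1 \<or> T = S2")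
    case True thus ?thesis unfolding a A_def by blast
  next
    case False thus ?thesis using that actc by blast
  qed
  have unA: "\<Union>(act st') = \<Union>(act st)"
  proof
    show "\<Union>(act st') \<subseteq> \<Union>(act st)"
    proof
      fix x assume "x \<in> \<Union>(act st')"
      then obtain T where T: "T \<in> act st'" "x \<in> T" by blast
      show "x \<in> \<Union>(act st)"
      proof (cases "T = A")
        case True thus ?thesis using T(2) S unfolding A_def by blast
      next
        case False thus ?thesis using cases_act[OF T(1)] T(2) by blast
      qed
    qed
    show "\<Union>(act st) \<subseteq> \<Union>(act st')"
    proof
      fix x assume "x \<in> \<Union>(act st)"
      then obtain T where T: "T \<in> act st" "x \<in> T" by blast
      then obtain B where "B \<in> act st'" "T \<subseteq> B" using up by blast
      thus "x \<in> \<Union>(act st')" using T by blast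
    qed
  qed
  have J1: "\<forall>B\<in>act st'. B \<noteq> {} \<and> B \<subseteq> V"
  proof
    fix B assume "B \<in> act st'"
    hence "B = A \<or> B \<in> act st" using cases_act by blast
    moreover have "A \<noteq> {}" using u unfolding A_def by blast
    ultimately show "B \<noteq> {} \<and> B \<subseteq> V" using AV I1 by blast
  qed
  have J2: "\<forall>B\<in>act st'. \<forall>C\<in>act st'. B \<noteq> C \<longrightarrow> B \<inter> C = {}"
  proof (intro ballI impI)
    fix B C assume B: "B \<in> act st'" and C: "C \<in> act st'" and BC: "B \<noteq> C"
    consider "B = A" "C \<in> act st" "C \<noteq> S1" "C \<noteq> S2"
      | "C = A" "B \<in> act st" "B \<noteq> S1" "B \<noteq> S2"
      | "B \<in> act st" "C \<in> act st"
      using cases_act[OF B] cases_act[OF C] BC by blast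
    thus "B \<inter> C = {}"
    proof cases
      case 1 thus ?thesis using Tdis[of C] by blast
    next
      case 2 thus ?thesis using Tdis[of B] by blast
    next
      case 3 thus ?thesis using I2 BC by blast
    qed
  qed
  have J3: "\<Union>(mat st') \<subseteq> \<Union>(act st')" using I3 GA unA S unfolding m A_def by blast
  have J4: "\<forall>g\<in>mat st'. card g = k \<and> (\<exists>B\<in>act st'. g \<subseteq> B)"
  proof
    fix g assume "g \<in> mat st'"
    hence "g \<in> mat st \<or> g \<in> G" unfolding m by simp
    thus "card g = k \<and> (\<exists>B\<in>act st'. g \<subseteq> B)"
    proof
      assume "g \<in> mat st"
      then obtain T where T: "T \<in> act st" "g \<subseteq> T" "card g = k" using I4 by blast
      obtain B where "B \<in> act st'" "T \<subseteq> B" using up[OF T(1)] by blast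
      thus ?thesis using T by blast
    next
      assume gG: "g \<in> G"
      have "g \<subseteq> A" using GA gG by blast
      moreover have "A \<in> act st'" unfolding a by simp
      moreover have "card g = k" using G1 gG by blast
      ultimately show ?thesis by blast
    qed
  qed
  have J5: "\<forall>g1\<in>mat st'. \<forall>g2\<in>mat st'. g1 \<noteq> g2 \<longrightarrow> g1 \<inter> g2 = {}"
    using I5 G2 GA unfolding m by blast
  have finA: "finite A" using AV finV finite_subset by blast
  have J6: "\<forall>T\<in>act st'. k dvd card (T \<inter> \<Union>(mat st'))"
  proof
    fix T assume T: "T \<in> act st'"
    show "k dvd card (T \<inter> \<Union>(mat st'))"
    proof (cases "T = A")
      case False
      hence T': "T \<in> act st" "T \<noteq> S1" "T \<noteq> S2" using cases_act[OF T] by blast+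
      have "T \<inter> \<Union>(mat st') = T \<inter> \<Union>(mat st)" using Tdis[OF T'] GA unfolding m by blast
      thus ?thesis using I6 T' by simp
    next
      case True
      let ?M = "\<Union>(mat st)"
      have eq: "T \<inter> \<Union>(mat st') = ((S1 \<inter> ?M) \<union> (S2 \<inter> ?M)) \<union> \<Union>G"
        using True GA unfolding m A_def by blast
      have f1: "finite (S1 \<inter> ?M)" "finite (S2 \<inter> ?M)" "finite (\<Union>G)"
        using finA GA finite_subset unfolding A_def by blast+
      have c1: "card ((S1 \<inter> ?M) \<union> (S2 \<inter> ?M)) = card (S1 \<inter> ?M) + card (S2 \<inter> ?M)"
        by (rule card_Un_disjoint) (use f1 dis in auto)
      have c2: "card (((S1 \<inter> ?M) \<union> (S2 \<inter> ?M)) \<union> \<Union>G) = card ((S1 \<inter> ?M) \<union> (S2 \<inter> ?M)) + card (\<Union>G)"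
        by (rule card_Un_disjoint) (use f1 GA in auto)
      have c3: "card (\<Union>G) = k * card G" by (rule card_Union_k) (use G1 G2 k2 in auto)
      have "k dvd card (S1 \<inter> ?M)" "k dvd card (S2 \<inter> ?M)" using I6 S by blast+
      thus ?thesis unfolding eq c2 c1 c3 by simp
    qed
  qed
  have J7: "\<forall>T\<in>act st'. card (free st' T) < k"
  proof
    fix T assume T: "T \<in> act st'"
    show "card (free st' T) < k"
    proof (cases "T = A")
      case True
      have "free st' T = free st (S1 \<union> S2) - \<Union>G" using True unfolding m free_def A_def by auto
      thus ?thesis using G3 by simp
    next
      case False
      hence T': "T \<in> act st" "T \<noteq> S1" "T \<noteq> S2" using cases_act[OF T] by blast+
      have "free st' T = free st T" using Tdis[OF T'] GA unfolding m free_def by blast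
      thus ?thesis using I7 T' by simp
    qed
  qed
  have J8: "\<forall>S. 0 \<le> dual st' S" unfolding d by (rule I8)
  have J9: "\<forall>S. dual st' S \<noteq> 0 \<longrightarrow> S \<noteq> {} \<and> (\<exists>B\<in>act st'. S \<subseteq> B) \<and> card S mod k \<noteq> 0"
  proof (intro allI impI)
    fix S assume "dual st' S \<noteq> 0"
    hence "dual st S \<noteq> 0" unfolding d .
    hence h: "S \<noteq> {}" "card S mod k \<noteq> 0" and "\<exists>B\<in>act st. S \<subseteq> B" using I9 by blast+
    then obtain B where B: "B \<in> act st" "S \<subseteq> B" by blast
    obtain C where "C \<in> act st'" "B \<subseteq> C" using up[OF B(1)] by blast
    thus "S \<noteq> {} \<and> (\<exists>B\<in>act st'. S \<subseteq> B) \<and> card S mod k \<noteq> 0" using h B(2) by blast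
  qed
  have J10: "\<forall>T\<in>act st'. \<forall>x\<in>T. \<forall>z\<in>T. hdist k dH (pos x) (pos z) \<le> KK * (\<Sum>S\<in>Pow V. dual st' S * cw T x z S)"
  proof (intro ballI)
    fix T x z assume T: "T \<in> act st'" and x: "x \<in> T" and z: "z \<in> T"
    show "hdist k dH (pos x) (pos z) \<le> KK * (\<Sum>S\<in>Pow V. dual st' S * cw T x z S)"
    proof (cases "T = A")
      case False
      hence T': "T \<in> act st" using cases_act[OF T] by blast
      thus ?thesis using I10 x z unfolding d by simp
    next
      case True
      have s1: "S1 \<subseteq> A" "S2 \<subseteq> A" unfolding A_def by auto
      have "x \<in> S1 \<or> x \<in> S2" "z \<in> S1 \<or> z \<in> S2" using x z True unfolding A_def by auto
      hence "hdist k dH (pos x) (pos z) \<le> KK * (\<Sum>S\<in>Pow V. dual st S * cw A x z S)"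
      proof (elim disjE)
        assume "x \<in> S1" "z \<in> S1" thus ?thesis using merge_sub[OF I S(1) s1(1)] by blast
      next
        assume "x \<in> S2" "z \<in> S2" thus ?thesis using merge_sub[OF I S(2) s1(2)] by blast
      next
        assume "x \<in> S1" "z \<in> S2"
        thus ?thesis using merge_cross[OF I S u w tight] unfolding A_def by blast
      next
        assume xz: "x \<in> S2" "z \<in> S1"
        have "hdist k dH (pos z) (pos x) \<le> KK * (\<Sum>S\<in>Pow V. dual st S * cw A z x S)"
          using merge_cross[OF I S u w tight xz(2) xz(1)] unfolding A_def by blast
        moreover have "hdist k dH (pos z) (pos x) = hdist k dH (pos x) (pos z)" by (rule hdist_sym)
        moreover have "(\<Sum>S\<in>Pow V. dual st S * cw A z x S) = (\<Sum>S\<in>Pow V. dual st S * cw A x z S)"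
          by (simp only: cw_sym[of A z x])
        ultimately show ?thesis by simp
      qed
      thus ?thesis using True unfolding d by simp
    qed
  qed
  have J11: "\<forall>u\<in>\<Union>(act st'). (\<Sum>S\<in>Pow V. if u \<in> S then dual st' S else 0) \<le> (time st' - atime u) / KK"
    unfolding d t unA by (rule I11)
  have J12: "\<forall>w\<in>V - \<Union>(act st'). time st' \<le> atime w" unfolding t unA by (rule I12)
  have J13: "\<forall>u\<in>\<Union>(act st'). \<forall>w\<in>\<Union>(act st'). u \<noteq> w \<longrightarrow> load V (dual st') u w \<le> opt_cost k dH atime pos u w / KK"
    unfolding d unA by (rule I13)
  have J14: "0 \<le> time st'" unfolding t by (rule I14)
  show ?thesis unfolding gdinv_def
    by (insert J1 J2 J3 J4 J5 J6 J7 J8 J9 J10 J11 J12 J13 J14, intro conjI; assumption)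
qed

end


context gdk begin

lemma inv_advance:
  assumes I: "gdinv st" and tt: "time st < t'" and arr: "\<forall>v\<in>V. atime v < t' \<longrightarrow> v \<in> \<Union>(act st)"
    and st': "st' = st\<lparr>time := t', dual := (\<lambda>S. if S \<in> act st \<and> free st S \<noteq> {}
                              then dual st S + 1 / KK * (t' - time st) else dual st S)\<rparr>"
    and fin: "\<forall>u w. crossing st' u w \<longrightarrow> load V (dual st') u w \<le> opt_cost k dH atime pos u w / KK"
  shows "gdinv st'"
proof -
  note I1 = gdinvD(1)[OF I] and I2 = gdinvD(2)[OF I] and I3 = gdinvD(3)[OF I]
    and I4 = gdinvD(4)[OF I] and I5 = gdinvD(5)[OF I] and I6 = gdinvD(6)[OF I]
    and I7 = gdinvD(7)[OF I] and I8 = gdinvD(8)[OF I] and I9 = gdinvD(9)[OF I]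
    and I10 = gdinvD(10)[OF I] and I11 = gdinvD(11)[OF I] and I12 = gdinvD(12)[OF I]
    and I13 = gdinvD(13)[OF I] and I14 = gdinvD(14)[OF I]
  define \<delta> where "\<delta> = 1 / KK * (t' - time st)"
  have dpos: "0 \<le> \<delta>" unfolding \<delta>_def using tt KK_pos by simp
  have a: "act st' = act st" and m: "mat st' = mat st"
    and d: "dual st' = (\<lambda>S. if S \<in> act st \<and> free st S \<noteq> {} then dual st S + \<delta> else dual st S)"
    and t: "time st' = t'" using st' unfolding \<delta>_def by simp_all
  have fr: "free st' T = free st T" for T unfolding free_def m ..
  have dge: "dual st S \<le> dual st' S" for S using dpos unfolding d by simp
  have J1: "\<forall>A\<in>act st'. A \<noteq> {} \<and> A \<subseteq> V" using I1 unfolding a by simp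
  have J2: "\<forall>B\<in>act st'. \<forall>C\<in>act st'. B \<noteq> C \<longrightarrow> B \<inter> C = {}" using I2 unfolding a by simp
  have J3: "\<Union>(mat st') \<subseteq> \<Union>(act st')" using I3 unfolding a m by simp
  have J4: "\<forall>g\<in>mat st'. card g = k \<and> (\<exists>B\<in>act st'. g \<subseteq> B)" using I4 unfolding a m by simp
  have J5: "\<forall>g1\<in>mat st'. \<forall>g2\<in>mat st'. g1 \<noteq> g2 \<longrightarrow> g1 \<inter> g2 = {}" using I5 unfolding m by simp
  have J6: "\<forall>T\<in>act st'. k dvd card (T \<inter> \<Union>(mat st'))" using I6 unfolding a m by simp
  have J7: "\<forall>T\<in>act st'. card (free st' T) < k" using I7 fr unfolding a by simp
  have J8: "\<forall>S. 0 \<le> dual st' S" using I8 dge order_trans by blast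
  have J9: "\<forall>S. dual st' S \<noteq> 0 \<longrightarrow> S \<noteq> {} \<and> (\<exists>B\<in>act st'. S \<subseteq> B) \<and> card S mod k \<noteq> 0"
  proof (intro allI impI)
    fix S assume nz: "dual st' S \<noteq> 0"
    show "S \<noteq> {} \<and> (\<exists>B\<in>act st'. S \<subseteq> B) \<and> card S mod k \<noteq> 0"
    proof (cases "S \<in> act st \<and> free st S \<noteq> {}")
      case False
      hence "dual st S \<noteq> 0" using nz unfolding d by (auto split: if_splits)
      thus ?thesis using I9 unfolding a by blast
    next
      case True
      let ?M = "\<Union>(mat st)"
      have SV: "S \<subseteq> V" "S \<noteq> {}" using I1 True by blast+
      have finS: "finite S" using SV finV finite_subset by blast
      have "card S = card ((S - ?M) \<union> (S \<inter> ?M))" by (metis Diff_partition Int_lower1 Un_commute inf_commute Un_Diff_Int)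
      also have "\<dots> = card (S - ?M) + card (S \<inter> ?M)" by (rule card_Un_disjoint) (use finS in auto)
      finally have cS: "card S = card (free st S) + card (S \<inter> ?M)" unfolding free_def .
      obtain q where q: "card (S \<inter> ?M) = k * q" using I6 True by blast
      have lt: "card (free st S) < k" using I7 True by blast
      have pos: "0 < card (free st S)" using True finS unfolding free_def by (simp add: card_gt_0_iff)
      have "card S mod k = card (free st S)" unfolding cS q using lt by simp
      thus ?thesis using pos True SV unfolding a by auto
    qed
  qed
  have J10: "\<forall>T\<in>act st'. \<forall>x\<in>T. \<forall>z\<in>T. hdist k dH (pos x) (pos z) \<le> KK * (\<Sum>S\<in>Pow V. dual st' S * cw T x z S)"
  proof (intro ballI)
    fix T x z assume T: "T \<in> act st'" and x: "x \<in> T" and z: "z \<in> T"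
    have "hdist k dH (pos x) (pos z) \<le> KK * (\<Sum>S\<in>Pow V. dual st S * cw T x z S)" using I10 T x z unfolding a by simp
    also have "\<dots> \<le> KK * (\<Sum>S\<in>Pow V. dual st' S * cw T x z S)"
    proof -
      have "(\<Sum>S\<in>Pow V. dual st S * cw T x z S) \<le> (\<Sum>S\<in>Pow V. dual st' S * cw T x z S)"
        by (rule sum_mono) (use dge cw_nonneg mult_right_mono in blast)
      thus ?thesis using KK_pos by simp
    qed
    finally show "hdist k dH (pos x) (pos z) \<le> KK * (\<Sum>S\<in>Pow V. dual st' S * cw T x z S)" .
  qed
  have J11: "\<forall>u\<in>\<Union>(act st'). (\<Sum>S\<in>Pow V. if u \<in> S then dual st' S else 0) \<le> (time st' - atime u) / KK"
  proof
    fix u assume "u \<in> \<Union>(act st')"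
    then obtain A where A: "A \<in> act st" "u \<in> A" unfolding a by blast
    have AV: "A \<in> Pow V" using I1 A by blast
    have "(\<Sum>S\<in>Pow V. if u \<in> S then dual st' S else 0)
        \<le> (\<Sum>S\<in>Pow V. (if u \<in> S then dual st S else 0) + (if S = A then \<delta> else 0))"
    proof (rule sum_mono)
      fix S assume "S \<in> Pow V"
      show "(if u \<in> S then dual st' S else 0) \<le> (if u \<in> S then dual st S else 0) + (if S = A then \<delta> else 0)"
      proof (cases "u \<in> S \<and> S \<in> act st")
        case True
        hence "S = A" using I2 A by blast
        thus ?thesis using dpos unfolding d by simp
      next
        case False thus ?thesis using dpos unfolding d by auto
      qed
    qed
    also have "\<dots> = (\<Sum>S\<in>Pow V. if u \<in> S then dual st S else 0) + \<delta>"
    proof -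
      have "(\<Sum>S\<in>Pow V. if S = A then \<delta> else 0) = \<delta>" using AV finV by (simp add: sum.delta)
      thus ?thesis by (simp add: sum.distrib)
    qed
    also have "\<dots> \<le> (time st - atime u) / KK + \<delta>" using I11 A by auto
    also have "\<dots> = (time st' - atime u) / KK" unfolding \<delta>_def t using KK_pos by (simp add: field_simps)
    finally show "(\<Sum>S\<in>Pow V. if u \<in> S then dual st' S else 0) \<le> (time st' - atime u) / KK" .
  qed
  have J12: "\<forall>w\<in>V - \<Union>(act st'). time st' \<le> atime w" using arr unfolding a t by force
  have J13: "\<forall>u\<in>\<Union>(act st'). \<forall>w\<in>\<Union>(act st'). u \<noteq> w \<longrightarrow> load V (dual st') u w \<le> opt_cost k dH atime pos u w / KK"
  proof (intro ballI impI)
    fix u w assume u: "u \<in> \<Union>(act st')" and w: "w \<in> \<Union>(act st')" and uw: "u \<noteq> w"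
    show "load V (dual st') u w \<le> opt_cost k dH atime pos u w / KK"
    proof (cases "crossing st' u w")
      case True thus ?thesis using fin by blast
    next
      case False
      obtain A1 A2 where A: "A1 \<in> act st" "u \<in> A1" "A2 \<in> act st" "w \<in> A2" using u w unfolding a by blast
      hence A12: "A1 = A2" using False unfolding a crossing_def by blast
      have uV: "u \<in> V" and wV: "w \<in> V" using I1 A by blast+
      have "load V (dual st') u w = load V (dual st) u w"
        unfolding load_alt[OF uV wV uw finV]
      proof (rule sum.cong)
        fix S assume "S \<in> Pow V"
        show "(if (u \<in> S) \<noteq> (w \<in> S) then dual st' S else 0) = (if (u \<in> S) \<noteq> (w \<in> S) then dual st S else 0)"
        proof (cases "(u \<in> S) \<noteq> (w \<in> S) \<and> S \<in> act st")
          case True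
          hence "S = A1" using I2 A A12 by blast
          thus ?thesis using True A A12 by simp
        next
          case False thus ?thesis unfolding d by auto
        qed
      qed simp
      moreover have "load V (dual st) u w \<le> opt_cost k dH atime pos u w / KK" using I13 u w uw unfolding a by blast
      ultimately show ?thesis by simp
    qed
  qed
  have J14: "0 \<le> time st'" using I14 tt unfolding t by simp
  show ?thesis unfolding gdinv_def
    by (insert J1 J2 J3 J4 J5 J6 J7 J8 J9 J10 J11 J12 J13 J14, intro conjI; assumption)
qed

lemma inv_step: assumes I: "gdinv st" and s: "gd_step k g dH V atime pos (1 / (real g * real k ^ 2)) st st'"
  shows "gdinv st'"
  using s unfolding gd_step_def KK_def[symmetric]
proof (elim disjE exE conjE bexE)
  fix v assume h: "v \<in> V" "v \<notin> \<Union>(act st)" "atime v = time st" "st' = st\<lparr>act := insert {v} (act st)\<rparr>"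
  show ?thesis by (rule inv_arrival[OF I h])
next
  fix S1 S2 u w G assume h: "S1 \<in> act st" "S2 \<in> act st" "S1 \<noteq> S2" "u \<in> S1" "w \<in> S2"
    "load V (dual st) u w = opt_cost k dH atime pos u w / KK"
    "\<forall>g\<in>G. g \<subseteq> free st (S1 \<union> S2) \<and> card g = k"
    "\<forall>g1\<in>G. \<forall>g2\<in>G. g1 \<noteq> g2 \<longrightarrow> g1 \<inter> g2 = {}"
    "card (free st (S1 \<union> S2) - \<Union>G) < k"
    "st' = st\<lparr>act := insert (S1 \<union> S2) (act st - {S1, S2}), mat := mat st \<union> G\<rparr>"
  show ?thesis by (rule inv_merge[OF I h])
next
  fix t' assume h: "time st < t'" "\<forall>v\<in>V. atime v < t' \<longrightarrow> v \<in> \<Union>(act st)"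
    "st' = st\<lparr>time := t', dual := (\<lambda>S. if S \<in> act st \<and> free st S \<noteq> {}
                              then dual st S + 1 / KK * (t' - time st) else dual st S)\<rparr>"
    "\<forall>u w. crossing st' u w \<longrightarrow> load V (dual st') u w \<le> opt_cost k dH atime pos u w / KK"
  show ?thesis by (rule inv_advance[OF I h])
qed

end


context gdk begin

lemma feas_bound:
  assumes dv: "k dvd card V" and fe: "dual_feasible k g dH V atime pos y" and SV: "S \<in> Pow V"
  shows "real (sur k S * (k - sur k S)) * y S
     \<le> real k ^ 2 * ((\<Sum>u\<in>V. \<Sum>w\<in>V. \<bar>opt_cost k dH atime pos u w\<bar>) / (real g * real k ^ 2))"
proof -
  let ?B = "(\<Sum>u\<in>V. \<Sum>w\<in>V. \<bar>opt_cost k dH atime pos u w\<bar>) / (real g * real k ^ 2)"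
  have ynn: "\<And>S. S \<subseteq> V \<Longrightarrow> 0 \<le> y S" using fe unfolding dual_feasible_def by blast
  have Bnn: "0 \<le> ?B" by (intro divide_nonneg_nonneg sum_nonneg) auto
  show ?thesis
  proof (cases "sur k S = 0")
    case True
    have "real (sur k S * (k - sur k S)) * y S = 0" using True by simp
    moreover have "0 \<le> real k ^ 2 * ?B" by (rule mult_nonneg_nonneg[OF _ Bnn]) simp
    ultimately show ?thesis by linarith
  next
    case False
    hence ne: "S \<noteq> {}" unfolding sur_def by auto
    have "S \<noteq> V" using False dv unfolding sur_def by auto
    then obtain u w where uw: "u \<in> S" "w \<in> V" "w \<notin> S" using ne SV by blast
    have uV: "u \<in> V" using uw SV by blast
    have uw': "u \<noteq> w" using uw by blast
    have SI: "S \<in> {S' \<in> Pow V. {u, w} \<in> delta V S'}"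
    proof -
      have "{u,w} \<in> edges V" using uV uw uw' unfolding edges_def by blast
      moreover have "card ({u,w} \<inter> S) = 1" using card_pair_inter[OF uw'] uw by simp
      ultimately show ?thesis using SV unfolding delta_def by simp
    qed
    have "y S \<le> load V y u w" unfolding load_def
      by (rule member_le_sum[OF SI]) (use ynn finV in auto)
    also have "\<dots> \<le> opt_cost k dH atime pos u w / (real g * real k ^ 2)"
      using fe uV uw uw' unfolding dual_feasible_def by blast
    also have "\<dots> \<le> ?B"
    proof (rule divide_right_mono)
      have "\<bar>opt_cost k dH atime pos u w\<bar> \<le> (\<Sum>w\<in>V. \<bar>opt_cost k dH atime pos u w\<bar>)"
        by (rule member_le_sum) (use uw finV in auto)
      also have "\<dots> \<le> (\<Sum>u\<in>V. \<Sum>w\<in>V. \<bar>opt_cost k dH atime pos u w\<bar>)"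
        by (rule member_le_sum[where f = "\<lambda>u. \<Sum>w\<in>V. \<bar>opt_cost k dH atime pos u w\<bar>"])
           (use uV finV in \<open>auto intro: sum_nonneg\<close>)
      finally show "opt_cost k dH atime pos u w \<le> (\<Sum>u\<in>V. \<Sum>w\<in>V. \<bar>opt_cost k dH atime pos u w\<bar>)" by linarith
    qed simp
    finally have yB: "y S \<le> ?B" .
    have "sur k S < k" unfolding sur_def using k2 by simp
    hence "sur k S * (k - sur k S) \<le> k * k" by (simp add: mult_le_mono)
    hence c0: "real (sur k S * (k - sur k S)) \<le> real (k * k)" by (rule of_nat_mono)
    have c: "real (sur k S * (k - sur k S)) \<le> real k ^ 2"
      using c0 unfolding power2_eq_square of_nat_mult[symmetric] .
    have "real (sur k S * (k - sur k S)) * y S \<le> real k ^ 2 * y S"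
      using c ynn SV by (simp add: mult_right_mono)
    also have "\<dots> \<le> real k ^ 2 * ?B" by (rule mult_left_mono[OF yB]) simp
    finally show ?thesis .
  qed
qed

end

theorem lemma7:
  fixes dH :: "'x list \<Rightarrow> real" and V :: "'v set" and atime :: "'v \<Rightarrow> real"
    and pos :: "'v \<Rightarrow> 'x" and k \<gamma> :: nat and st :: "'v gd_state"
  assumes "2 \<le> k" and "1 \<le> \<gamma>" and "\<gamma> \<le> k - 1" and "hmetric k \<gamma> dH"
    and "finite V" and "k dvd card V" and "\<forall>v\<in>V. 0 \<le> atime v"
    and "(gd_step k \<gamma> dH V atime pos (1 / (real \<gamma> * real k ^ 2)))\<^sup>*\<^sup>* gd_init st"
    and "\<Union>(mat st) = V"
  shows "(\<Sum>G\<in>mat st. gcost dH pos G)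
           \<le> 4 * real \<gamma> * real (card V) * real k * dual_obj k V (dual st)
       \<and> 4 * real \<gamma> * real (card V) * real k * dual_obj k V (dual st)
           \<le> 4 * real \<gamma> * real (card V) * real k * dual_opt k \<gamma> dH V atime pos"
proof -
  interpret gdk k \<gamma> dH V atime pos using assms(1,2,4,5,7) by unfold_locales
  have I: "gdinv st" using assms(8)
  proof (induction rule: rtranclp_induct)
    case base thus ?case by (rule inv_init)
  next
    case (step y z) thus ?case using inv_step by blast
  qed
  note I1 = gdinvD(1)[OF I] and I2 = gdinvD(2)[OF I] and I3 = gdinvD(3)[OF I]
    and I4 = gdinvD(4)[OF I] and I5 = gdinvD(5)[OF I] and I8 = gdinvD(8)[OF I] and I9 = gdinvD(9)[OF I]
    and I10 = gdinvD(10)[OF I] and I13 = gdinvD(13)[OF I]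
  have unV: "\<Union>(act st) = V" using I1 I3 assms(9) by blast
  define obj where "obj = dual_obj k V (dual st)"
  define sd where "sd = (\<Sum>S\<in>Pow V. dual st S)"
  have sdnn: "0 \<le> sd" unfolding sd_def using I8 by (simp add: sum_nonneg)
  have Sle: "(real k - 1) * sd \<le> obj"
    unfolding sd_def obj_def dual_obj_def sum_distrib_left
  proof (rule sum_mono)
    fix S assume "S \<in> Pow V"
    show "(real k - 1) * dual st S \<le> real (sur k S * (k - sur k S)) * dual st S"
    proof (cases "dual st S = 0")
      case True thus ?thesis by simp
    next
      case False
      hence "card S mod k \<noteq> 0" using I9 by blast
      hence "1 \<le> sur k S" "sur k S < k" unfolding sur_def using k2 by auto
      hence "k - 1 \<le> sur k S * (k - sur k S)" by (rule nat_prod_bound)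
      hence "real (k - 1) \<le> real (sur k S * (k - sur k S))" by linarith
      moreover have "real (k - 1) = real k - 1" using k2 by (simp add: of_nat_diff)
      ultimately have "real k - 1 \<le> real (sur k S * (k - sur k S))" by linarith
      thus ?thesis using I8 by (simp add: mult_right_mono)
    qed
  qed
  have rk: "2 \<le> real k" using k2 by simp
  have objnn: "0 \<le> obj"
  proof -
    have "0 \<le> (real k - 1) * sd" by (rule mult_nonneg_nonneg) (use rk sdnn in simp_all)
    thus ?thesis using Sle by linarith
  qed
  have key: "real k * (2 * sd) \<le> 4 * obj"
  proof -
    have "0 \<le> (2 * real k - 4) * sd" by (rule mult_nonneg_nonneg) (use rk sdnn in simp_all)
    moreover have "4 * ((real k - 1) * sd) - real k * (2 * sd) = (2 * real k - 4) * sd"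
      by (simp add: algebra_simps)
    ultimately show ?thesis using Sle by linarith
  qed
  have gb: "gcost dH pos G \<le> 4 * KK * obj" if G: "G \<in> mat st" for G
  proof -
    obtain A where A: "A \<in> act st" "G \<subseteq> A" and cG: "card G = k" using I4 G by blast
    have finG: "finite G" using cG k2 card_ge_0_finite by (metis not_numeral_le_zero gr0I)
    obtain xs0 where "distinct xs0 \<and> set xs0 = G" using finite_distinct_list[OF finG] by blast
    hence hx: "distinct (SOME xs. distinct xs \<and> set xs = G) \<and> set (SOME xs. distinct xs \<and> set xs = G) = G"
      by (rule someI)
    define xs where "xs = (SOME xs. distinct xs \<and> set xs = G)"
    have xs: "distinct xs" "set xs = G" using hx unfolding xs_def by auto
    have len: "length xs = k" using distinct_card[OF xs(1)] xs(2) cG by simp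
    have "0 < length xs" using len k2 by simp
    hence "xs ! 0 \<in> set xs" by (rule nth_mem)
    hence x0: "xs ! 0 \<in> A" using xs(2) A(2) by blast
    have "gcost dH pos G = dH (map pos xs)" unfolding gcost_def xs_def ..
    also have "\<dots> \<le> (\<Sum>i<k. hdist k dH (map pos xs ! i) (pos (xs ! 0)))"
      by (rule hm_group[OF hm k1]) (simp add: len)
    also have "\<dots> \<le> (\<Sum>i<k. KK * (2 * sd))"
    proof (rule sum_mono)
      fix i assume "i \<in> {..<k}"
      hence i: "i < k" by simp
      have "i < length xs" using i len by simp
      hence "xs ! i \<in> set xs" by (rule nth_mem)
      hence xi: "xs ! i \<in> A" using xs(2) A(2) by blast
      have "hdist k dH (map pos xs ! i) (pos (xs ! 0)) = hdist k dH (pos (xs ! i)) (pos (xs ! 0))"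
        using i len by simp
      also have "\<dots> \<le> KK * (\<Sum>S\<in>Pow V. dual st S * cw A (xs ! i) (xs ! 0) S)"
        using I10 A(1) xi x0 by blast
      also have "\<dots> \<le> KK * (2 * sd)"
      proof -
        have "(\<Sum>S\<in>Pow V. dual st S * cw A (xs ! i) (xs ! 0) S) \<le> (\<Sum>S\<in>Pow V. 2 * dual st S)"
          by (rule sum_mono) (use I8 cw_le2 in \<open>simp add: mult_left_mono mult.commute\<close>)
        also have "(\<Sum>S\<in>Pow V. 2 * dual st S) = 2 * sd" unfolding sd_def by (simp add: sum_distrib_left)
        finally have "(\<Sum>S\<in>Pow V. dual st S * cw A (xs ! i) (xs ! 0) S) \<le> 2 * sd" .
        thus ?thesis by (rule mult_left_mono) (use KK_pos in simp)
      qed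
      finally show "hdist k dH (map pos xs ! i) (pos (xs ! 0)) \<le> KK * (2 * sd)" .
    qed
    also have "\<dots> = KK * (real k * (2 * sd))" by simp
    also have "\<dots> \<le> KK * (4 * obj)" using key KK_pos by simp
    finally show ?thesis by simp
  qed
  have finmat: "finite (mat st)" using assms(5,9) by (metis Pow_iff Sup_upper finite_Pow_iff finite_subset subsetI)
  have cardV: "card V = k * card (mat st)"
    using card_Union_k[of "mat st" k] I4 I5 k2 assms(9) by simp
  have first: "(\<Sum>G\<in>mat st. gcost dH pos G) \<le> 4 * real \<gamma> * real (card V) * real k * obj"
  proof -
    have "(\<Sum>G\<in>mat st. gcost dH pos G) \<le> (\<Sum>G\<in>mat st. 4 * KK * obj)" by (rule sum_mono) (rule gb)
    also have "\<dots> = real (card (mat st)) * (4 * KK * obj)" by simp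
    also have "\<dots> = 4 * real \<gamma> * real (card V) * real k * obj" unfolding cardV KK_def
      by (simp add: power2_eq_square algebra_simps)
    finally show ?thesis .
  qed
  have feas: "dual_feasible k \<gamma> dH V atime pos (dual st)"
    unfolding dual_feasible_def using I8 I13 unV unfolding KK_def by auto
  have bdd: "bdd_above (dual_obj k V ` {y. dual_feasible k \<gamma> dH V atime pos y})"
  proof (rule bdd_aboveI2)
    fix y assume "y \<in> {y. dual_feasible k \<gamma> dH V atime pos y}"
    hence fe: "dual_feasible k \<gamma> dH V atime pos y" by simp
    show "dual_obj k V y \<le> (\<Sum>S\<in>Pow V. real k ^ 2 * ((\<Sum>u\<in>V. \<Sum>w\<in>V. \<bar>opt_cost k dH atime pos u w\<bar>) / (real \<gamma> * real k ^ 2)))"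
      unfolding dual_obj_def by (rule sum_mono) (rule feas_bound[OF assms(6) fe])
  qed
  have "obj \<le> dual_opt k \<gamma> dH V atime pos"
    unfolding obj_def dual_opt_def by (rule cSup_upper) (use feas bdd in auto)
  hence second: "4 * real \<gamma> * real (card V) * real k * obj \<le> 4 * real \<gamma> * real (card V) * real k * dual_opt k \<gamma> dH V atime pos"
    by (simp add: mult_left_mono)
  show ?thesis using first second unfolding obj_def by simp
qed


end
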